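(* Let $a<b$ and let $f,g:[a,b]\to\mathbb{R}$ be differentiable on $[a,b]$ (one-sided derivatives at the endpoints), and suppose $f$ and $g$ are twice differentiable at the point $a$ (from the right). Suppose $g(a)\neq g(b)$ and put $K=\frac{f(b)-f(a)}{g(b)-g(a)}$. If $$\bigl[f'(a)-K\,g'(a)\bigr]\cdot\bigl[f''(a)-K\,g''(a)\bigr]> 0,$$ then there exists $\eta\in(a,b)$ such that $$f'(\eta)-\frac{f(\eta)-f(a)}{\eta-a}=K\left[g'(\eta)-\frac{g(\eta)-g(a)}{\eta-a}\right].$$
   Context: Differentiability on a closed interval $[a,b]$ means differentiability on $(a,b)$ together with existence of the one-sided derivatives at $a$ and $b$. *)

theory Defs
  imports "HOL-Analysis.Analysis"
begin

end

theory Submission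
  imports Defs
begin

lemma flett_core:
  fixes h H' :: "real \<Rightarrow> real" and h2 a b :: real
  assumes ab: "a < b"
    and dh: "\<And>x. x \<in> {a..b} \<Longrightarrow> (h has_real_derivative H' x) (at x within {a..b})"
    and d2: "(H' has_real_derivative h2) (at_right a)"
    and hab: "h a = h b"
    and p1: "H' a > 0" and p2: "h2 > 0"
  shows "\<exists>\<eta>\<in>{a<..<b}. H' \<eta> = (h \<eta> - h a) / (\<eta> - a)"
proof -
  define \<phi> where "\<phi> x = (h x - h a) / (x - a)" for x
  have "((\<lambda>y. (H' y - H' a) / (y - a)) \<longlongrightarrow> h2) (at a within {a<..})"
    using d2 by (simp add: has_field_derivative_iff)
  hence "\<forall>\<^sub>F y in at a within {a<..}. (H' y - H' a) / (y - a) > 0"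
    using p2 by (rule order_tendstoD(1))
  then obtain d where d: "d > 0" and dP: "\<And>y. y \<in> {a<..} \<Longrightarrow> y \<noteq> a \<Longrightarrow> dist y a < d \<Longrightarrow> (H' y - H' a) / (y - a) > 0"
    unfolding eventually_at by blast
  define x1 where "x1 = a + min d (b - a) / 2"
  have x1: "a < x1" "x1 < b" "x1 < a + d" using d ab by (auto simp: x1_def min_def field_simps)
  have Hpos: "H' y > H' a" if "a < y" "y \<le> x1" for y
  proof -
    have "(H' y - H' a) / (y - a) > 0" using dP[of y] that x1 by (auto simp: dist_real_def)
    thus ?thesis using that by (simp add: zero_less_divide_iff)
  qed
  have "\<exists>z\<in>{a<..<x1}. (\<lambda>x. h x - H' a * x) x1 - (\<lambda>x. h x - H' a * x) a = (\<lambda>t. (H' z - H' a) * t) (x1 - a)"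
  proof (rule mvt_simple[OF x1(1)])
    fix x assume "a \<le> x" "x \<le> x1"
    hence "(h has_real_derivative H' x) (at x within {a..x1})"
      using dh[of x] x1 by (auto intro: DERIV_subset)
    hence "((\<lambda>x. h x - H' a * x) has_real_derivative H' x - H' a) (at x within {a..x1})"
      by (auto intro!: derivative_eq_intros)
    thus "((\<lambda>x. h x - H' a * x) has_derivative (\<lambda>t. (H' x - H' a) * t)) (at x within {a..x1})"
      by (simp add: has_field_derivative_def mult.commute[of _ "H' a"])
  qed
  then obtain z where z: "a < z" "z < x1" "h x1 - H' a * x1 - (h a - H' a * a) = (H' z - H' a) * (x1 - a)" by auto
  have "(H' z - H' a) * (x1 - a) > 0" using Hpos[of z] z x1 by simp
  hence "h x1 - h a > H' a * (x1 - a)" using z(3) by (simp add: algebra_simps)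
  hence phx1: "\<phi> x1 > H' a" using x1 by (simp add: \<phi>_def field_simps)
  have "((\<lambda>y. (h y - h a) / (y - a)) \<longlongrightarrow> H' a) (at a within {a..b})"
    using dh[of a] ab by (simp add: has_field_derivative_iff)
  hence "\<forall>\<^sub>F y in at a within {a..b}. (h y - h a) / (y - a) < \<phi> x1"
    using phx1 by (rule order_tendstoD(2))
  then obtain e where e: "e > 0" and eP: "\<And>y. y \<in> {a..b} \<Longrightarrow> y \<noteq> a \<Longrightarrow> dist y a < e \<Longrightarrow> (h y - h a) / (y - a) < \<phi> x1"
    unfolding eventually_at by blast
  define c where "c = a + min e (x1 - a) / 2"
  have c: "a < c" "c < x1" using e x1 by (auto simp: c_def min_def field_simps)
  have cin: "c \<in> {a..b}" "c \<noteq> a" "dist c a < e" using c x1 e by (auto simp: c_def dist_real_def min_def)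
  have phc: "\<phi> c < \<phi> x1" using eP[OF cin] by (simp only: \<phi>_def[of c])
  have phb: "\<phi> b < \<phi> x1" using phx1 p1 hab by (simp add: \<phi>_def)
  have contd: "\<And>x. x \<in> {a<..<b} \<Longrightarrow> (h has_real_derivative H' x) (at x)"
  proof -
    fix x assume x: "x \<in> {a<..<b}"
    have "(h has_real_derivative H' x) (at x within {a..b})" using dh x by auto
    moreover have "at x within {a..b} = at x" using x by (intro at_within_interior) auto
    ultimately show "(h has_real_derivative H' x) (at x)" by simp
  qed
  have "continuous_on {c..b} \<phi>"
  proof -
    have "continuous_on {c..b} h"
    proof -
      have "continuous_on {a..b} h"
        using dh by (meson DERIV_continuous continuous_on_eq_continuous_within)
      thus ?thesis by (rule continuous_on_subset) (use c in auto)
    qed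
    thus ?thesis unfolding \<phi>_def using c by (auto intro!: continuous_intros)
  qed
  then obtain \<eta> where \<eta>: "\<eta> \<in> {c..b}" and mx: "\<And>y. y \<in> {c..b} \<Longrightarrow> \<phi> y \<le> \<phi> \<eta>"
    using continuous_attains_sup[of "{c..b}" \<phi>] c x1 by auto
  have "\<phi> x1 \<le> \<phi> \<eta>" using mx[of x1] c x1 by auto
  hence \<eta>i: "c < \<eta>" "\<eta> < b" using \<eta> phc phb by (auto simp: order.order_iff_strict)
  hence \<eta>ab: "\<eta> \<in> {a<..<b}" using c by auto
  have der: "(\<phi> has_real_derivative ((H' \<eta> * (\<eta> - a) - (h \<eta> - h a)) / (\<eta> - a)^2)) (at \<eta>)"
    unfolding \<phi>_def using contd[OF \<eta>ab] \<eta>ab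
    by (auto intro!: derivative_eq_intros simp: power2_eq_square)
  have "(H' \<eta> * (\<eta> - a) - (h \<eta> - h a)) / (\<eta> - a)^2 = 0"
  proof (rule DERIV_local_max[OF der])
    show "0 < min (\<eta> - c) (b - \<eta>)" using \<eta>i by simp
    show "\<forall>y. \<bar>\<eta> - y\<bar> < min (\<eta> - c) (b - \<eta>) \<longrightarrow> \<phi> y \<le> \<phi> \<eta>"
      using mx by (auto simp: abs_less_iff)
  qed
  hence "H' \<eta> * (\<eta> - a) = h \<eta> - h a" using \<eta>ab by simp
  thus ?thesis using \<eta>ab by (intro bexI[of _ \<eta>]) (auto simp: field_simps)
qed

theorem mainTheorem4:
  fixes f g f' g' :: "real \<Rightarrow> real" and f'' g'' a b :: real
  assumes ab: "a < b"
    and df: "\<And>x. x \<in> {a..b} \<Longrightarrow> (f has_real_derivative f' x) (at x within {a..b})"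
    and dg: "\<And>x. x \<in> {a..b} \<Longrightarrow> (g has_real_derivative g' x) (at x within {a..b})"
    and d2f: "(f' has_real_derivative f'') (at_right a)"
    and d2g: "(g' has_real_derivative g'') (at_right a)"
    and gab: "g a \<noteq> g b"
    and pos: "(f' a - ((f b - f a) / (g b - g a)) * g' a) * (f'' - ((f b - f a) / (g b - g a)) * g'') > 0"
  shows "\<exists>\<eta>\<in>{a<..<b}. f' \<eta> - (f \<eta> - f a) / (\<eta> - a)
           = ((f b - f a) / (g b - g a)) * (g' \<eta> - (g \<eta> - g a) / (\<eta> - a))"
proof -
  define K where "K = (f b - f a) / (g b - g a)"
  define s :: real where "s = (if f' a - K * g' a > 0 then 1 else -1)"
  have s: "s \<noteq> 0" by (simp add: s_def)
  define h where "h x = s * (f x - K * g x)" for x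
  define H where "H x = s * (f' x - K * g' x)" for x
  have dh: "(h has_real_derivative H x) (at x within {a..b})" if "x \<in> {a..b}" for x
    unfolding h_def H_def using df[OF that] dg[OF that] by (auto intro!: derivative_eq_intros)
  have d2: "(H has_real_derivative s * (f'' - K * g'')) (at_right a)"
    unfolding H_def using d2f d2g by (auto intro!: derivative_eq_intros)
  have gne: "g b - g a \<noteq> 0" using gab by simp
  have hab: "h a = h b" unfolding h_def K_def using gne by (simp add: field_simps)
  have pos': "(f' a - K * g' a) * (f'' - K * g'') > 0" using pos by (simp add: K_def)
  have p1: "H a > 0" and p2: "s * (f'' - K * g'') > 0"
    using pos' by (auto simp: H_def s_def zero_less_mult_iff)
  obtain \<eta> where \<eta>: "\<eta> \<in> {a<..<b}" and eq: "H \<eta> = (h \<eta> - h a) / (\<eta> - a)"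
    using flett_core[OF ab dh d2 hab p1 p2] by auto
  have "s * (f' \<eta> - K * g' \<eta>) = s * ((f \<eta> - f a) / (\<eta> - a) - K * ((g \<eta> - g a) / (\<eta> - a)))"
  proof -
    have ne: "\<eta> - a \<noteq> 0" using \<eta> by simp
    have "(h \<eta> - h a) / (\<eta> - a) = s * ((f \<eta> - f a) / (\<eta> - a) - K * ((g \<eta> - g a) / (\<eta> - a)))"
      unfolding h_def using ne by (simp add: divide_simps) (simp add: algebra_simps)
    thus ?thesis using eq by (simp add: H_def)
  qed
  hence "f' \<eta> - K * g' \<eta> = (f \<eta> - f a) / (\<eta> - a) - K * ((g \<eta> - g a) / (\<eta> - a))"
    using s by simp
  thus ?thesis using \<eta> unfolding K_def[symmetric] by (intro bexI[of _ \<eta>]) (simp_all add: algebra_simps)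
qed

end
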